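(* Let $f:\mathbb{R}^d\to\mathbb{R}$ and $\phi:\mathbb{R}\to\mathbb{R}$ be twice differentiable and let $L\coloneqq\phi\circ f$. Let $\alpha_\phi(x)$ be a Newton stepsize schedule for $L$. Define, wherever the expression is defined, \[ \alpha(x)\coloneqq\alpha_\phi(x)\left(1+\frac{\phi''(f(x))}{\phi'(f(x))}\,\|\nabla f(x)\|_x^{*2}\right)^{-1}. \] Assume $\nabla f(x)\in\mathrm{Range}(\nabla^2 f(x))$ at every point $x$ where a step is taken. Then the Newton method on $f$ with stepsize schedule $\alpha(x)$ produces the identical sequence of iterates to the Newton method on $L$ with stepsize schedule $\alpha_\phi(x)$.
   Context: $\mathbf{B}^\dagger$ denotes the Moore–Penrose pseudoinverse. $\|g\|_x^{*2}\coloneqq\langle g,[\nabla^2 f(x)]^{\dagger}g\rangle$. The Newton method with stepsize schedule $\beta(\cdot)$ on a function $F$ is the iteration $x^{k+1}=x^k-\beta(x^k)[\nabla^2F(x^k)]^{\dagger}\nabla F(x^k)$, started from the same initial point for both methods. *)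

theory Defs
  imports "HOL-Analysis.Analysis"
begin

definition pinv :: "real^'n^'n \<Rightarrow> real^'n^'n" where
  "pinv A = (THE B. A ** B ** A = A \<and> B ** A ** B = B \<and>
                    transpose (A ** B) = A ** B \<and> transpose (B ** A) = B ** A)"

definition grad :: "(real^'n \<Rightarrow> real) \<Rightarrow> real^'n \<Rightarrow> real^'n" where
  "grad f x = (\<chi> i. frechet_derivative f (at x) (axis i 1))"

definition hess :: "(real^'n \<Rightarrow> real) \<Rightarrow> real^'n \<Rightarrow> real^'n^'n" where
  "hess f x = matrix (frechet_derivative (grad f) (at x))"

definition twice_differentiable :: "(real^'n \<Rightarrow> real) \<Rightarrow> bool" where
  "twice_differentiable f \<longleftrightarrow> (\<forall>x. f differentiable at x) \<and> (\<forall>x. grad f differentiable at x)"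

definition twice_differentiable_real :: "(real \<Rightarrow> real) \<Rightarrow> bool" where
  "twice_differentiable_real \<phi> \<longleftrightarrow> (\<forall>t. \<phi> differentiable at t) \<and> (\<forall>t. deriv \<phi> differentiable at t)"

definition dual_norm_sq :: "(real^'n \<Rightarrow> real) \<Rightarrow> real^'n \<Rightarrow> real^'n \<Rightarrow> real" where
  "dual_norm_sq f x g = g \<bullet> (pinv (hess f x) *v g)"

primrec newton :: "(real^'n \<Rightarrow> real) \<Rightarrow> (real^'n \<Rightarrow> real) \<Rightarrow> real^'n \<Rightarrow> nat \<Rightarrow> real^'n" where
  "newton F \<beta> x0 0 = x0"
| "newton F \<beta> x0 (Suc k) =
     (let x = newton F \<beta> x0 k in x - \<beta> x *\<^sub>R (pinv (hess F x) *v grad F x))"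

end

theory Submission
  imports Defs
begin

definition penrose :: "real^'n^'n \<Rightarrow> real^'n^'n \<Rightarrow> bool" where
  "penrose A B \<longleftrightarrow> A ** B ** A = A \<and> B ** A ** B = B \<and>
                    transpose (A ** B) = A ** B \<and> transpose (B ** A) = B ** A"

lemma penrose_unique:
  assumes "penrose A B" "penrose A C" shows "B = C"
proof -
  have b1: "A ** B ** A = A" and b2: "B ** A ** B = B" and b3: "transpose (A ** B) = A ** B"
    and b4: "transpose (B ** A) = B ** A" using assms(1) by (auto simp: penrose_def)
  have c1: "A ** C ** A = A" and c2: "C ** A ** C = C" and c3: "transpose (A ** C) = A ** C"
    and c4: "transpose (C ** A) = C ** A" using assms(2) by (auto simp: penrose_def)
  have t1: "transpose A = transpose A ** (A ** C)"
  proof -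
    have "transpose A = transpose (A ** C ** A)" using c1 by simp
    also have "\<dots> = transpose A ** transpose (A ** C)" by (rule matrix_transpose_mul)
    also have "\<dots> = transpose A ** (A ** C)" by (simp only: c3)
    finally show ?thesis .
  qed
  have t2: "transpose A = (B ** A) ** transpose A"
  proof -
    have "transpose A = transpose (A ** (B ** A))" using b1 by (simp only: matrix_mul_assoc)
    also have "\<dots> = transpose (B ** A) ** transpose A" by (rule matrix_transpose_mul)
    also have "\<dots> = (B ** A) ** transpose A" by (simp only: b4)
    finally show ?thesis .
  qed
  have "B = B ** (A ** B)" using b2 by (simp only: matrix_mul_assoc)
  also have "\<dots> = B ** transpose (A ** B)" by (simp only: b3)
  also have "\<dots> = B ** (transpose B ** transpose A)" by (simp only: matrix_transpose_mul)
  also have "\<dots> = B ** (transpose B ** (transpose A ** (A ** C)))"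
    using arg_cong[OF t1, of "\<lambda>X. B ** (transpose B ** X)"] by (simp only:)
  also have "\<dots> = B ** ((transpose B ** transpose A) ** (A ** C))" by (simp only: matrix_mul_assoc)
  also have "\<dots> = B ** (transpose (A ** B) ** (A ** C))" by (simp only: matrix_transpose_mul)
  also have "\<dots> = B ** ((A ** B) ** (A ** C))" by (simp only: b3)
  also have "\<dots> = (B ** A ** B) ** (A ** C)" by (simp only: matrix_mul_assoc)
  also have "\<dots> = B ** (A ** C)" by (simp only: b2)
  finally have B: "B = B ** (A ** C)" .
  have "C = transpose (C ** A) ** C" using c2 c4 by (simp only: matrix_mul_assoc)
  also have "\<dots> = (transpose A ** transpose C) ** C" by (simp only: matrix_transpose_mul)
  also have "\<dots> = (((B ** A) ** transpose A) ** transpose C) ** C"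
    using arg_cong[OF t2, of "\<lambda>X. (X ** transpose C) ** C"] by (simp only:)
  also have "\<dots> = (B ** A) ** ((transpose A ** transpose C) ** C)" by (simp only: matrix_mul_assoc)
  also have "\<dots> = (B ** A) ** (transpose (C ** A) ** C)" by (simp only: matrix_transpose_mul)
  also have "\<dots> = (B ** A) ** ((C ** A) ** C)" by (simp only: c4)
  also have "\<dots> = B ** (A ** C)" by (simp only: c2 matrix_mul_assoc)
  finally show ?thesis using B by simp
qed

lemma transpose_eq_by_inner:
  fixes X :: "real^'n^'n"
  assumes "\<And>u v. (X *v u) \<bullet> v = u \<bullet> (X *v v)"
  shows "transpose X = X"
proof -
  have "X $ i $ j = X $ j $ i" for i j
  proof -
    have "X $ i $ j = (X *v axis j 1) \<bullet> axis i 1"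
      by (simp add: inner_axis matrix_vector_mult_basis column_def)
    also have "\<dots> = axis j 1 \<bullet> (X *v axis i 1)" by (rule assms)
    also have "\<dots> = X $ j $ i"
      by (simp add: inner_axis' matrix_vector_mult_basis column_def)
    finally show ?thesis .
  qed
  then show ?thesis by (simp add: transpose_def vec_eq_iff)
qed

lemma inner_mat: "((A::real^'n^'n) *v u) \<bullet> y = u \<bullet> (transpose A *v y)"
  by (metis dot_lmul_matrix inner_commute transpose_matrix_vector)

lemma penrose_exists: "\<exists>B. penrose (A::real^'n^'n) B"
proof -
  let ?At = "transpose A"
  define K where "K = range (\<lambda>v. ?At *v v)"
  define R where "R = range (\<lambda>v. A *v v)"
  have subK: "subspace K" unfolding K_def
    by (rule linear_subspace_image[OF matrix_vector_mul_linear subspace_UNIV])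
  have subR: "subspace R" unfolding R_def
    by (rule linear_subspace_image[OF matrix_vector_mul_linear subspace_UNIV])
  have spanK: "span K = K" using subK by (simp add: span_eq_iff)
  have spanR: "span R = R" using subR by (simp add: span_eq_iff)
  have perpK: "(\<forall>w\<in>K. z \<bullet> w = 0) \<longleftrightarrow> A *v z = 0" for z
  proof
    assume h: "\<forall>w\<in>K. z \<bullet> w = 0"
    have "z \<bullet> (?At *v (A *v z)) = 0" using h by (auto simp: K_def)
    then have "(A *v z) \<bullet> (A *v z) = 0" by (simp add: inner_mat)
    then show "A *v z = 0" by simp
  next
    assume "A *v z = 0"
    show "\<forall>w\<in>K. z \<bullet> w = 0"
    proof
      fix w assume "w \<in> K"
      then obtain y where y: "w = ?At *v y" by (auto simp: K_def)
      have "z \<bullet> (?At *v y) = (A *v z) \<bullet> y" by (rule inner_mat[symmetric])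
      then show "z \<bullet> w = 0" using y \<open>A *v z = 0\<close> by simp
    qed
  qed
  have perpR: "?At *v q = 0" if "\<forall>w\<in>R. q \<bullet> w = 0" for q
  proof -
    have "q \<bullet> (A *v (?At *v q)) = 0" using that by (auto simp: R_def)
    moreover have "(A *v (?At *v q)) \<bullet> q = (?At *v q) \<bullet> (?At *v q)" by (rule inner_mat)
    ultimately have "(?At *v q) \<bullet> (?At *v q) = 0"
      using inner_commute[of q "A *v (?At *v q)"] by simp
    then show ?thesis by simp
  qed
  have decK: "\<exists>x1 x2. x = x1 + x2 \<and> x1 \<in> K \<and> A *v x2 = 0" for x
  proof -
    obtain y z where "y \<in> span K" "\<And>w. w \<in> span K \<Longrightarrow> orthogonal z w" "x = y + z"
      using orthogonal_subspace_decomp_exists[of K x] by blast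
    then show ?thesis using perpK[of z] spanK by (auto simp: orthogonal_def)
  qed
  have inj: "inj_on (\<lambda>v. ?At *v (A *v v)) (span K)"
  proof (rule inj_onI)
    fix v v' assume v: "v \<in> span K" "v' \<in> span K" and e: "?At *v (A *v v) = ?At *v (A *v v')"
    have "?At *v (A *v (v - v')) = 0" using e
      by (simp add: matrix_vector_mult_diff_distrib)
    then have "(A *v (v - v')) \<bullet> (A *v (v - v')) = 0"
      by (simp add: inner_mat)
    then have "A *v (v - v') = 0" by simp
    then have "\<forall>w\<in>K. (v - v') \<bullet> w = 0" using perpK by blast
    moreover have "v - v' \<in> K" using v spanK subK by (simp add: subspace_diff)
    ultimately have "(v - v') \<bullet> (v - v') = 0" by blast
    then show "v = v'" by simp
  qed
  obtain g where g: "range g \<subseteq> span K" "linear g" "\<forall>x\<in>span K. g (?At *v (A *v x)) = x"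
  proof -
    have "linear (\<lambda>v. (?At ** A) *v v)" by (rule matrix_vector_mul_linear)
    then have linAtA: "linear (\<lambda>v. ?At *v (A *v v))" by (simp only: matrix_vector_mul_assoc matrix_mul_assoc)
    show ?thesis using real_vector.linear_inj_on_left_inverse[OF linAtA inj] that by blast
  qed
  have Im: "\<exists>v\<in>K. ?At *v y = ?At *v (A *v v)" for y
  proof -
    obtain p q where pq: "p \<in> span R" "\<And>w. w \<in> span R \<Longrightarrow> orthogonal q w" "y = p + q"
      using orthogonal_subspace_decomp_exists[of R y] by blast
    have "?At *v q = 0" using pq(2) spanR perpR by (auto simp: orthogonal_def)
    then have e1: "?At *v y = ?At *v p" using pq(3) by (simp add: matrix_vector_right_distrib)
    have "p \<in> R" using pq(1) spanR by simp
    then obtain x where "p = A *v x" by (auto simp: R_def)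
    moreover obtain x1 x2 where "x = x1 + x2" "x1 \<in> K" "A *v x2 = 0" using decK by blast
    ultimately show ?thesis using e1 by (auto simp: matrix_vector_right_distrib)
  qed
  define B where "B y = g (?At *v y)" for y
  have linB: "linear B" unfolding B_def using g(2)
    by (rule linear_compose[OF matrix_vector_mul_linear, unfolded o_def])
  have BK: "B y \<in> K" for y using g(1) spanK by (auto simp: B_def)
  have AtAB: "?At *v (A *v B y) = ?At *v y" for y
  proof -
    obtain v where "v \<in> K" "?At *v y = ?At *v (A *v v)" using Im by blast
    then show ?thesis using g(3) spanK by (simp add: B_def)
  qed
  have ABA: "A *v B (A *v x) = A *v x" for x
  proof -
    obtain x1 x2 where "x = x1 + x2" "x1 \<in> K" "A *v x2 = 0" using decK by blast
    then show ?thesis using g(3) spanK by (simp add: B_def matrix_vector_right_distrib)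
  qed
  have BAB: "B (A *v B y) = B y" for y
    using g(3) spanK BK by (simp add: B_def)
  have ABsym: "(A *v B y) \<bullet> y' = (A *v B y) \<bullet> (A *v B y')" for y y'
  proof -
    have "(A *v B y) \<bullet> y' = B y \<bullet> (?At *v y')" by (rule inner_mat)
    also have "\<dots> = B y \<bullet> (?At *v (A *v B y'))" by (simp only: AtAB)
    also have "\<dots> = (A *v B y) \<bullet> (A *v B y')" by (rule inner_mat[symmetric])
    finally show ?thesis .
  qed
  have BAsym: "B (A *v x) \<bullet> x' = B (A *v x) \<bullet> B (A *v x')" for x x'
  proof -
    have "A *v (x' - B (A *v x')) = 0" using ABA by (simp add: matrix_vector_mult_diff_distrib)
    then have "(x' - B (A *v x')) \<bullet> B (A *v x) = 0" using perpK BK by blast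
    then have "B (A *v x) \<bullet> (x' - B (A *v x')) = 0" by (simp only: inner_commute)
    then show ?thesis by (simp add: inner_diff_right)
  qed
  define Bm where "Bm = matrix B"
  have Bm: "Bm *v y = B y" for y using linB by (simp add: Bm_def matrix_works linear_matrix_vector_mul_eq)
  have "penrose A Bm"
    unfolding penrose_def
  proof (intro conjI)
    show "A ** Bm ** A = A"
      unfolding matrix_eq
    proof
      fix x
      have "(A ** Bm ** A) *v x = A *v (Bm *v (A *v x))" by (simp only: matrix_vector_mul_assoc matrix_mul_assoc)
      also have "\<dots> = A *v x" by (simp only: Bm ABA)
      finally show "(A ** Bm ** A) *v x = A *v x" .
    qed
    show "Bm ** A ** Bm = Bm"
      unfolding matrix_eq
    proof
      fix x
      have "(Bm ** A ** Bm) *v x = Bm *v (A *v (Bm *v x))" by (simp only: matrix_vector_mul_assoc matrix_mul_assoc)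
      also have "\<dots> = Bm *v x" by (simp only: Bm BAB)
      finally show "(Bm ** A ** Bm) *v x = Bm *v x" .
    qed
    show "transpose (A ** Bm) = A ** Bm"
    proof (rule transpose_eq_by_inner)
      fix u v
      have "((A ** Bm) *v u) \<bullet> v = (A *v B u) \<bullet> v" by (simp only: matrix_vector_mul_assoc[symmetric] Bm)
      also have "\<dots> = (A *v B u) \<bullet> (A *v B v)" by (rule ABsym)
      also have "\<dots> = (A *v B v) \<bullet> (A *v B u)" by (rule inner_commute)
      also have "\<dots> = (A *v B v) \<bullet> u" by (rule ABsym[symmetric])
      also have "\<dots> = u \<bullet> (A *v B v)" by (rule inner_commute)
      also have "\<dots> = u \<bullet> ((A ** Bm) *v v)" by (simp only: matrix_vector_mul_assoc[symmetric] Bm)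
      finally show "((A ** Bm) *v u) \<bullet> v = u \<bullet> ((A ** Bm) *v v)" .
    qed
    show "transpose (Bm ** A) = Bm ** A"
    proof (rule transpose_eq_by_inner)
      fix u v
      have "((Bm ** A) *v u) \<bullet> v = B (A *v u) \<bullet> v" by (simp only: matrix_vector_mul_assoc[symmetric] Bm)
      also have "\<dots> = B (A *v u) \<bullet> B (A *v v)" by (rule BAsym)
      also have "\<dots> = B (A *v v) \<bullet> B (A *v u)" by (rule inner_commute)
      also have "\<dots> = B (A *v v) \<bullet> u" by (rule BAsym[symmetric])
      also have "\<dots> = u \<bullet> B (A *v v)" by (rule inner_commute)
      also have "\<dots> = u \<bullet> ((Bm ** A) *v v)" by (simp only: matrix_vector_mul_assoc[symmetric] Bm)
      finally show "((Bm ** A) *v u) \<bullet> v = u \<bullet> ((Bm ** A) *v v)" .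
    qed
  qed
  then show ?thesis by blast
qed

lemma penrose_pinv: "penrose A (pinv A)"
proof -
  obtain B where "penrose A B" using penrose_exists by blast
  then have ex1: "\<exists>!B. penrose A B" using penrose_unique by blast
  have "penrose A (THE B. penrose A B)" using ex1 by (rule theI')
  then show ?thesis unfolding pinv_def penrose_def .
qed


lemma key_dir:
  fixes H :: "real^'n^'n" and g u :: "real^'n" and a b :: real
  assumes symH: "transpose H = H" and gu: "g = H *v u" and b: "b \<noteq> 0"
    and nz: "1 + a / b * (g \<bullet> (pinv H *v g)) \<noteq> 0"
  shows "pinv (b *\<^sub>R H + a *\<^sub>R (\<chi> i j. g $ i * g $ j)) *v (b *\<^sub>R g)
         = inverse (1 + a / b * (g \<bullet> (pinv H *v g))) *\<^sub>R (pinv H *v g)"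
proof -
  define M where "M = b *\<^sub>R H + a *\<^sub>R (\<chi> i j. g $ i * g $ j)"
  define Q where "Q = pinv H"
  define P where "P = pinv M"
  define s where "s = g \<bullet> (Q *v g)"
  define c where "c = inverse (1 + a / b * s)"
  have pQ: "penrose H Q" unfolding Q_def by (rule penrose_pinv)
  have pP: "penrose M P" unfolding P_def by (rule penrose_pinv)
  have Mv: "M *v v = b *\<^sub>R (H *v v) + (a * (g \<bullet> v)) *\<^sub>R g" for v
    by (simp add: M_def vec_eq_iff matrix_vector_mult_def inner_vec_def sum.distrib
        sum_distrib_left sum_distrib_right algebra_simps)
  have symM: "transpose M = M"
  proof -
    have "H $ i $ j = H $ j $ i" for i j using symH by (metis transpose_def vec_lambda_beta)
    then show ?thesis by (simp add: M_def transpose_def vec_eq_iff mult.commute)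
  qed
  have HQg: "H *v (Q *v g) = g"
  proof -
    have "H *v (Q *v g) = (H ** Q ** H) *v u" by (simp add: gu matrix_vector_mul_assoc matrix_mul_assoc)
    also have "\<dots> = g" using pQ gu by (simp add: penrose_def)
    finally show ?thesis .
  qed
  define w where "w = c *\<^sub>R (Q *v g)"
  have cb: "c * (b + a * s) = b"
  proof -
    have "b + a * s = b * (1 + a / b * s)" using b by (simp add: field_simps)
    then show ?thesis using nz b by (simp add: c_def s_def Q_def)
  qed
  have Mw: "M *v w = b *\<^sub>R g"
  proof -
    have "M *v w = (c * b) *\<^sub>R g + (a * (c * s)) *\<^sub>R g"
      by (simp add: Mv w_def matrix_vector_mult_scaleR HQg s_def scaleR_add_right)
    also have "\<dots> = (c * (b + a * s)) *\<^sub>R g" by (simp add: algebra_simps)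
    finally show ?thesis using cb by simp
  qed
  define z where "z = transpose Q *v (Q *v g)"
  have Hz: "H *v z = Q *v g"
  proof -
    have "Q *v g = (Q ** H ** Q) *v g" using pQ by (simp add: penrose_def)
    also have "\<dots> = (transpose (Q ** H) ** Q) *v g" using pQ by (simp add: penrose_def)
    also have "\<dots> = (H ** transpose Q ** Q) *v g" by (simp add: matrix_transpose_mul symH)
    also have "\<dots> = H *v z" by (simp add: z_def matrix_vector_mul_assoc matrix_mul_assoc)
    finally show ?thesis by simp
  qed
  define y where "y = (c / b) *\<^sub>R z - (c * a * (g \<bullet> z) / b ^ 2) *\<^sub>R w"
  have My: "M *v y = w"
  proof -
    have Mz: "M *v z = b *\<^sub>R (Q *v g) + (a * (g \<bullet> z)) *\<^sub>R g" by (simp add: Mv Hz)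
    have "M *v y = (c / b) *\<^sub>R (M *v z) - (c * a * (g \<bullet> z) / b ^ 2) *\<^sub>R (M *v w)"
      by (simp add: y_def matrix_vector_mult_diff_distrib matrix_vector_mult_scaleR)
    also have "\<dots> = c *\<^sub>R (Q *v g)"
      using b by (simp add: Mz Mw algebra_simps power2_eq_square)
    finally show ?thesis by (simp add: w_def)
  qed
  have PMM: "P ** M ** M = M"
  proof -
    have "P ** M ** M = transpose (P ** M) ** M" using pP by (simp add: penrose_def)
    also have "\<dots> = M ** transpose P ** M" by (simp add: matrix_transpose_mul symM)
    also have "\<dots> = transpose (M ** P ** M)"
      by (simp add: matrix_transpose_mul symM matrix_mul_assoc)
    also have "\<dots> = M" using pP symM by (simp add: penrose_def)
    finally show ?thesis .
  qed
  have "P *v (b *\<^sub>R g) = P *v (M *v (M *v y))" by (simp add: My Mw)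
  also have "\<dots> = (P ** M ** M) *v y" by (simp only: matrix_vector_mul_assoc matrix_mul_assoc)
  also have "\<dots> = M *v y" by (simp only: PMM)
  finally have "P *v (b *\<^sub>R g) = w" using My by simp
  then show ?thesis unfolding P_def M_def w_def c_def s_def Q_def .
qed


lemma Mv_lemma:
  fixes H :: "real^'n^'n"
  shows "(b *\<^sub>R H + a *\<^sub>R (\<chi> i j. g $ i * g $ j)) *v v = b *\<^sub>R (H *v v) + (a * (g \<bullet> v)) *\<^sub>R g"
  by (simp add: vec_eq_iff matrix_vector_mult_def inner_vec_def sum.distrib
        sum_distrib_left sum_distrib_right algebra_simps)

lemma grad_deriv:
  fixes f :: "real^'n \<Rightarrow> real"
  assumes "f differentiable at x"
  shows "(f has_derivative (\<lambda>v. grad f x \<bullet> v)) (at x)"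
proof -
  let ?F = "frechet_derivative f (at x)"
  have d: "(f has_derivative ?F) (at x)" using assms frechet_derivative_works by blast
  have lin: "linear ?F" using d has_derivative_linear by blast
  have "?F v = grad f x \<bullet> v" for v
  proof -
    have e: "(\<Sum>i\<in>UNIV. v$i *\<^sub>R axis i 1) = v" using basis_expansion[of v] by (simp add: scalar_mult_eq_scaleR)
    have "?F v = ?F (\<Sum>i\<in>UNIV. v$i *\<^sub>R axis i 1)" by (simp only: e)
    also have "\<dots> = (\<Sum>i\<in>UNIV. v$i * ?F (axis i 1))"
      using lin by (simp add: linear_sum linear_scale)
    also have "\<dots> = grad f x \<bullet> v" by (simp add: grad_def inner_vec_def mult.commute)
    finally show ?thesis .
  qed
  then have "?F = (\<lambda>v. grad f x \<bullet> v)" by (rule ext)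
  then show ?thesis using d by simp
qed

lemma sym_half:
  fixes f :: "real^'n \<Rightarrow> real" and G :: "real^'n \<Rightarrow> real^'n" and D :: "real^'n \<Rightarrow> real^'n"
  assumes fder: "\<And>y. (f has_derivative (\<lambda>v. G y \<bullet> v)) (at y)"
    and lin: "linear D"
    and appr: "\<And>y. norm (y - x) < \<delta> \<Longrightarrow> norm (G y - G x - D (y - x)) \<le> \<epsilon> * norm (y - x)"
    and t: "t > 0" "t * (norm h + norm k) < \<delta>" and e: "\<epsilon> \<ge> 0"
  shows "\<bar>f (x + t *\<^sub>R h + t *\<^sub>R k) - f (x + t *\<^sub>R h) - f (x + t *\<^sub>R k) + f x - t^2 * (D k \<bullet> h)\<bar>
           \<le> t^2 * \<epsilon> * ((2 * norm h + norm k) * norm h)"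
proof -
  define \<psi> where "\<psi> s = f (x + s *\<^sub>R h + t *\<^sub>R k) - f (x + s *\<^sub>R h)" for s
  define \<psi>' where "\<psi>' s = G (x + s *\<^sub>R h + t *\<^sub>R k) \<bullet> h - G (x + s *\<^sub>R h) \<bullet> h" for s
  have der: "DERIV \<psi> s :> \<psi>' s" for s
  proof -
    have l1: "((\<lambda>s. x + s *\<^sub>R h + t *\<^sub>R k) has_derivative (\<lambda>d. d *\<^sub>R h)) (at s)"
      by (auto intro!: derivative_eq_intros)
    have l2: "((\<lambda>s. x + s *\<^sub>R h) has_derivative (\<lambda>d. d *\<^sub>R h)) (at s)"
      by (auto intro!: derivative_eq_intros)
    have c1: "((\<lambda>s. f (x + s *\<^sub>R h + t *\<^sub>R k)) has_derivative
               (\<lambda>d. G (x + s *\<^sub>R h + t *\<^sub>R k) \<bullet> (d *\<^sub>R h))) (at s)"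
      by (rule has_derivative_compose[OF l1 fder])
    have c2: "((\<lambda>s. f (x + s *\<^sub>R h)) has_derivative (\<lambda>d. G (x + s *\<^sub>R h) \<bullet> (d *\<^sub>R h))) (at s)"
      by (rule has_derivative_compose[OF l2 fder])
    have "(\<psi> has_derivative (\<lambda>d. G (x + s *\<^sub>R h + t *\<^sub>R k) \<bullet> (d *\<^sub>R h) - G (x + s *\<^sub>R h) \<bullet> (d *\<^sub>R h))) (at s)"
      unfolding \<psi>_def by (rule has_derivative_diff[OF c1 c2])
    then show ?thesis unfolding \<psi>'_def
      by (rule has_derivative_imp_has_field_derivative) (simp add: algebra_simps)
  qed
  obtain \<xi> where xi: "0 < \<xi>" "\<xi> < t" "\<psi> t - \<psi> 0 = (t - 0) * \<psi>' \<xi>"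
    using MVT2[of 0 t \<psi> \<psi>'] der t(1) by blast
  define v1 where "v1 = \<xi> *\<^sub>R h + t *\<^sub>R k"
  define v2 where "v2 = \<xi> *\<^sub>R h"
  define e1 where "e1 = G (x + v1) - G x - D v1"
  define e2 where "e2 = G (x + v2) - G x - D v2"
  have nv1: "norm v1 \<le> t * (norm h + norm k)"
  proof -
    have "norm v1 \<le> \<xi> * norm h + t * norm k"
      unfolding v1_def using xi t by (metis abs_of_pos norm_scaleR norm_triangle_ineq)
    also have "\<dots> \<le> t * norm h + t * norm k" using xi by (simp add: mult_right_mono)
    finally show ?thesis by (simp add: algebra_simps)
  qed
  have nv2: "norm v2 \<le> t * norm h" unfolding v2_def using xi by (simp add: mult_right_mono)
  have "t * norm h \<le> t * (norm h + norm k)" using t by (simp add: mult_left_mono)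
  then have nv2': "norm v2 < \<delta>" using nv2 t by linarith
  have ne1: "norm e1 \<le> \<epsilon> * norm v1" using appr[of "x + v1"] nv1 t unfolding e1_def by simp
  have ne2: "norm e2 \<le> \<epsilon> * norm v2" using appr[of "x + v2"] nv2' unfolding e2_def by simp
  have psi: "\<psi>' \<xi> = t * (D k \<bullet> h) + (e1 - e2) \<bullet> h"
  proof -
    have a1: "G (x + \<xi> *\<^sub>R h + t *\<^sub>R k) = G x + D v1 + e1" unfolding e1_def v1_def by (simp add: add.assoc)
    have a2: "G (x + \<xi> *\<^sub>R h) = G x + D v2 + e2" unfolding e2_def v2_def by simp
    have "D v1 - D v2 = t *\<^sub>R D k"
      using lin unfolding v1_def v2_def by (simp add: linear_add linear_scale)
    then show ?thesis unfolding \<psi>'_def a1 a2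
      by (simp add: inner_add_left inner_diff_left algebra_simps)
  qed
  have bound: "\<bar>(e1 - e2) \<bullet> h\<bar> \<le> t * \<epsilon> * (2 * norm h + norm k) * norm h"
  proof -
    have "\<bar>(e1 - e2) \<bullet> h\<bar> \<le> norm (e1 - e2) * norm h" by (rule Cauchy_Schwarz_ineq2)
    also have "norm (e1 - e2) \<le> \<epsilon> * norm v1 + \<epsilon> * norm v2"
      using ne1 ne2 norm_triangle_ineq4[of e1 e2] by linarith
    also have "\<epsilon> * norm v1 + \<epsilon> * norm v2 \<le> \<epsilon> * (t * (norm h + norm k)) + \<epsilon> * (t * norm h)"
      using nv1 nv2 e by (intro add_mono mult_left_mono) auto
    finally show ?thesis by (simp add: algebra_simps mult_right_mono)
  qed
  have "f (x + t *\<^sub>R h + t *\<^sub>R k) - f (x + t *\<^sub>R h) - f (x + t *\<^sub>R k) + f x = \<psi> t - \<psi> 0"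
    by (simp add: \<psi>_def)
  also have "\<dots> = t^2 * (D k \<bullet> h) + t * ((e1 - e2) \<bullet> h)"
    using xi(3) psi by (simp add: algebra_simps power2_eq_square)
  finally have "\<bar>f (x + t *\<^sub>R h + t *\<^sub>R k) - f (x + t *\<^sub>R h) - f (x + t *\<^sub>R k) + f x - t^2 * (D k \<bullet> h)\<bar>
      = t * \<bar>(e1 - e2) \<bullet> h\<bar>" using t by (simp add: abs_mult)
  also have "\<dots> \<le> t * (t * \<epsilon> * (2 * norm h + norm k) * norm h)"
    using bound t by (simp add: mult_left_mono)
  finally show ?thesis by (simp add: power2_eq_square algebra_simps)
qed


lemma hess_sym_core:
  fixes f :: "real^'n \<Rightarrow> real" and G :: "real^'n \<Rightarrow> real^'n" and D :: "real^'n \<Rightarrow> real^'n"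
  assumes fder: "\<And>y. (f has_derivative (\<lambda>v. G y \<bullet> v)) (at y)"
    and Gd: "(G has_derivative D) (at x)"
  shows "D k \<bullet> h = D h \<bullet> k"
proof -
  have lin: "linear D" using Gd has_derivative_linear by blast
  have alt: "\<forall>e>0. \<exists>d>0. \<forall>y. norm (y - x) < d \<longrightarrow> norm (G y - G x - D (y - x)) \<le> e * norm (y - x)"
    using Gd has_derivative_at_alt by blast
  define C where "C = (2 * norm h + norm k) * norm h + (2 * norm k + norm h) * norm k"
  have C0: "C \<ge> 0" unfolding C_def by simp
  have main: "\<bar>D k \<bullet> h - D h \<bullet> k\<bar> \<le> \<epsilon> * C" if e: "\<epsilon> > 0" for \<epsilon>
  proof -
    obtain \<delta> where d: "\<delta> > 0" "\<And>y. norm (y - x) < \<delta> \<Longrightarrow> norm (G y - G x - D (y - x)) \<le> \<epsilon> * norm (y - x)"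
      using alt e by blast
    define t where "t = \<delta> / (norm h + norm k + 1)"
    have np: "norm h + norm k + 1 > 0" by (simp add: add_nonneg_pos)
    have tpos: "t > 0" unfolding t_def using d(1) np by simp
    have "t * (norm h + norm k) < t * (norm h + norm k + 1)" using tpos by simp
    also have "\<dots> = \<delta>" unfolding t_def using np by simp
    finally have tb: "t * (norm h + norm k) < \<delta>" .
    then have tb': "t * (norm k + norm h) < \<delta>" by (simp add: add.commute)
    note h1 = sym_half[OF fder lin d(2) tpos tb less_imp_le[OF e]]
    note h2 = sym_half[OF fder lin d(2) tpos tb' less_imp_le[OF e]]
    have sw: "x + t *\<^sub>R k + t *\<^sub>R h = x + t *\<^sub>R h + t *\<^sub>R k" by (simp add: algebra_simps)
    have "\<bar>t^2 * (D k \<bullet> h) - t^2 * (D h \<bullet> k)\<bar> \<le> t^2 * \<epsilon> * C"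
      using h1 h2 unfolding sw C_def by (simp add: algebra_simps abs_diff_le_iff abs_le_iff) 
    then have "t^2 * \<bar>D k \<bullet> h - D h \<bullet> k\<bar> \<le> t^2 * (\<epsilon> * C)"
      by (simp add: abs_mult right_diff_distrib[symmetric] mult.assoc)
    then show ?thesis using tpos by simp
  qed
  show ?thesis
  proof (rule ccontr)
    assume ne: "D k \<bullet> h \<noteq> D h \<bullet> k"
    define z where "z = \<bar>D k \<bullet> h - D h \<bullet> k\<bar>"
    have zp: "z > 0" using ne by (simp add: z_def)
    have "z \<le> z / (C + 1) * C" using main[of "z / (C + 1)"] zp C0 by (simp add: z_def)
    also have "\<dots> < z" using zp C0 by (simp add: field_simps)
    finally show False by simp
  qed
qed

lemma hess_symmetric:
  fixes f :: "real^'n \<Rightarrow> real"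
  assumes "twice_differentiable f"
  shows "transpose (hess f x) = hess f x"
proof -
  have fder: "\<And>y. (f has_derivative (\<lambda>v. grad f y \<bullet> v)) (at y)"
    using assms grad_deriv unfolding twice_differentiable_def by blast
  let ?D = "frechet_derivative (grad f) (at x)"
  have Gd: "(grad f has_derivative ?D) (at x)"
    using assms frechet_derivative_works unfolding twice_differentiable_def by blast
  have bl: "bounded_linear ?D" using Gd has_derivative_bounded_linear by blast
  have hv: "hess f x *v v = ?D v" for v
    unfolding hess_def using matrix_vector_mul(3)[OF bl] by metis
  show ?thesis
  proof (rule transpose_eq_by_inner)
    fix u v
    show "(hess f x *v u) \<bullet> v = u \<bullet> (hess f x *v v)"
      using hess_sym_core[OF fder Gd, of u v] by (simp add: hv inner_commute)
  qed
qed

lemma grad_comp: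
  fixes f :: "real^'n \<Rightarrow> real" and \<phi> :: "real \<Rightarrow> real"
  assumes "f differentiable at y" "\<phi> differentiable at (f y)"
  shows "grad (\<phi> \<circ> f) y = deriv \<phi> (f y) *\<^sub>R grad f y"
proof -
  have dphi: "(\<phi> has_derivative (\<lambda>d. deriv \<phi> (f y) * d)) (at (f y))"
    using assms(2) DERIV_deriv_iff_real_differentiable has_field_derivative_def by blast
  have c: "((\<lambda>z. \<phi> (f z)) has_derivative (\<lambda>v. deriv \<phi> (f y) * (grad f y \<bullet> v))) (at y)"
    by (rule has_derivative_compose[OF grad_deriv[OF assms(1)] dphi])
  have "frechet_derivative (\<phi> \<circ> f) (at y) = (\<lambda>v. deriv \<phi> (f y) * (grad f y \<bullet> v))"
    using frechet_derivative_at[OF c] by (simp add: o_def)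
  then show ?thesis by (simp add: grad_def vec_eq_iff inner_axis)
qed

lemma hess_comp:
  fixes f :: "real^'n \<Rightarrow> real" and \<phi> :: "real \<Rightarrow> real"
  assumes tf: "twice_differentiable f" and tp: "twice_differentiable_real \<phi>"
  shows "hess (\<phi> \<circ> f) x = deriv \<phi> (f x) *\<^sub>R hess f x
           + deriv (deriv \<phi>) (f x) *\<^sub>R (\<chi> i j. grad f x $ i * grad f x $ j)"
proof -
  have gc: "grad (\<phi> \<circ> f) = (\<lambda>y. deriv \<phi> (f y) *\<^sub>R grad f y)"
    using tf tp grad_comp unfolding twice_differentiable_def twice_differentiable_real_def by blast
  let ?D = "frechet_derivative (grad f) (at x)"
  have Gd: "(grad f has_derivative ?D) (at x)"
    using tf frechet_derivative_works unfolding twice_differentiable_def by blast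
  have dphi2: "(deriv \<phi> has_derivative (\<lambda>d. deriv (deriv \<phi>) (f x) * d)) (at (f x))"
    using tp DERIV_deriv_iff_real_differentiable has_field_derivative_def
    unfolding twice_differentiable_real_def by blast
  have fd: "f differentiable at x" using tf unfolding twice_differentiable_def by blast
  have d2: "((\<lambda>y. deriv \<phi> (f y)) has_derivative (\<lambda>v. deriv (deriv \<phi>) (f x) * (grad f x \<bullet> v))) (at x)"
    by (rule has_derivative_compose[OF grad_deriv[OF fd] dphi2])
  have pr: "((\<lambda>y. deriv \<phi> (f y) *\<^sub>R grad f y) has_derivative
      (\<lambda>v. deriv \<phi> (f x) *\<^sub>R ?D v + (deriv (deriv \<phi>) (f x) * (grad f x \<bullet> v)) *\<^sub>R grad f x)) (at x)"
    by (rule has_derivative_scaleR[OF d2 Gd])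
  define F where "F = (\<lambda>v. deriv \<phi> (f x) *\<^sub>R ?D v + (deriv (deriv \<phi>) (f x) * (grad f x \<bullet> v)) *\<^sub>R grad f x)"
  have hF: "hess (\<phi> \<circ> f) x = matrix F"
    unfolding hess_def gc F_def using frechet_derivative_at[OF pr] by simp
  have blF: "bounded_linear F" using pr has_derivative_bounded_linear unfolding F_def by blast
  have blD: "bounded_linear ?D" using Gd has_derivative_bounded_linear by blast
  have hv: "hess f x *v v = ?D v" for v
    unfolding hess_def using matrix_vector_mul(3)[OF blD] by metis
  have Fv: "matrix F *v v = F v" for v using matrix_vector_mul(3)[OF blF] by metis
  show ?thesis unfolding hF matrix_eq
  proof
    fix v
    have "matrix F *v v = F v" by (rule Fv)
    also have "\<dots> = (deriv \<phi> (f x) *\<^sub>R hess f x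
           + deriv (deriv \<phi>) (f x) *\<^sub>R (\<chi> i j. grad f x $ i * grad f x $ j)) *v v"
      by (simp only: F_def Mv_lemma hv)
    finally show "matrix F *v v = (deriv \<phi> (f x) *\<^sub>R hess f x
           + deriv (deriv \<phi>) (f x) *\<^sub>R (\<chi> i j. grad f x $ i * grad f x $ j)) *v v" .
  qed
qed

theorem corollary1:
  fixes f :: "real^'d \<Rightarrow> real" and \<phi> :: "real \<Rightarrow> real"
    and \<alpha>\<phi> :: "real^'d \<Rightarrow> real" and x0 :: "real^'d"
  assumes "twice_differentiable f"
    and "twice_differentiable_real \<phi>"
  defines "L \<equiv> \<phi> \<circ> f"
    and "\<alpha> \<equiv> (\<lambda>x. \<alpha>\<phi> x * inverse (1 + deriv (deriv \<phi>) (f x) / deriv \<phi> (f x) * dual_norm_sq f x (grad f x)))"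
  assumes defined: "\<And>k. deriv \<phi> (f (newton f \<alpha> x0 k)) \<noteq> 0 \<and>
       1 + deriv (deriv \<phi>) (f (newton f \<alpha> x0 k)) / deriv \<phi> (f (newton f \<alpha> x0 k))
           * dual_norm_sq f (newton f \<alpha> x0 k) (grad f (newton f \<alpha> x0 k)) \<noteq> 0"
    and range: "\<And>k. grad f (newton f \<alpha> x0 k) \<in> range (\<lambda>v. hess f (newton f \<alpha> x0 k) *v v)"
  shows "\<forall>k. newton f \<alpha> x0 k = newton L \<alpha>\<phi> x0 k"
proof
  fix k
  show "newton f \<alpha> x0 k = newton L \<alpha>\<phi> x0 k"
  proof (induction k)
    case 0
    show ?case by simp
  next
    case (Suc k)
    define x where "x = newton f \<alpha> x0 k"
    define g where "g = grad f x"
    define H where "H = hess f x"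
    define a where "a = deriv (deriv \<phi>) (f x)"
    define b where "b = deriv \<phi> (f x)"
    have b: "b \<noteq> 0" using defined[of k] unfolding b_def x_def by blast
    have nz: "1 + a / b * (g \<bullet> (pinv H *v g)) \<noteq> 0"
      using defined[of k] unfolding a_def b_def x_def g_def H_def dual_norm_sq_def by blast
    obtain u where gu: "g = H *v u" using range[of k] unfolding g_def H_def x_def by blast
    have fd: "f differentiable at x" using assms(1) unfolding twice_differentiable_def by blast
    have pd: "\<phi> differentiable at (f x)" using assms(2) unfolding twice_differentiable_real_def by blast
    have gL: "grad L x = b *\<^sub>R g"
      unfolding L_def b_def g_def by (rule grad_comp[OF fd pd])
    have hL: "hess L x = b *\<^sub>R H + a *\<^sub>R (\<chi> i j. g $ i * g $ j)"
      unfolding L_def b_def a_def g_def H_def by (rule hess_comp[OF assms(1) assms(2)])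
    have symH: "transpose H = H" unfolding H_def by (rule hess_symmetric[OF assms(1)])
    have kd: "pinv (hess L x) *v grad L x
        = inverse (1 + a / b * (g \<bullet> (pinv H *v g))) *\<^sub>R (pinv H *v g)"
      unfolding hL gL by (rule key_dir[OF symH gu b nz])
    have al: "\<alpha> x = \<alpha>\<phi> x * inverse (1 + a / b * (g \<bullet> (pinv H *v g)))"
      unfolding \<alpha>_def a_def b_def g_def H_def dual_norm_sq_def by simp
    have "newton f \<alpha> x0 (Suc k) = x - \<alpha> x *\<^sub>R (pinv H *v g)"
      by (simp add: x_def H_def g_def Let_def)
    also have "\<dots> = x - \<alpha>\<phi> x *\<^sub>R (pinv (hess L x) *v grad L x)"
      by (simp add: kd al)
    also have "\<dots> = newton L \<alpha>\<phi> x0 (Suc k)"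
      using Suc.IH by (simp add: x_def Let_def)
    finally show ?case .
  qed
qed

end
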